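(* Let $M_T(n)$ denote the maximum modulus of an independence root over all trees on $n$ vertices. Then $$\frac{\log_2(M_T(n))}{n}=\frac{1}{2}+o(1)\quad\text{as } n\to\infty.$$
   Context: For a finite simple graph $G$, the independence polynomial is $i(G,x)=\sum_{k\ge 0} i_k x^k$, where $i_k$ is the number of independent sets of size $k$ in $G$; its complex roots are the independence roots of $G$. *)

theory Defs
  imports "HOL-Analysis.Analysis" "HOL-Computational_Algebra.Polynomial"
begin

definition simple_graph :: "nat \<Rightarrow> (nat \<Rightarrow> nat \<Rightarrow> bool) \<Rightarrow> bool" where
  "simple_graph n E \<longleftrightarrow>
     (\<forall>u v. E u v \<longrightarrow> u < n \<and> v < n) \<and>
     (\<forall>u v. E u v \<longrightarrow> E v u) \<and> (\<forall>v. \<not> E v v)"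

definition connected_graph :: "nat \<Rightarrow> (nat \<Rightarrow> nat \<Rightarrow> bool) \<Rightarrow> bool" where
  "connected_graph n E \<longleftrightarrow> (\<forall>u<n. \<forall>v<n. (E\<^sup>*\<^sup>*) u v)"

definition has_cycle :: "(nat \<Rightarrow> nat \<Rightarrow> bool) \<Rightarrow> bool" where
  "has_cycle E \<longleftrightarrow> (\<exists>vs. length vs \<ge> 3 \<and> distinct vs \<and>
      (\<forall>i. Suc i < length vs \<longrightarrow> E (vs ! i) (vs ! Suc i)) \<and> E (last vs) (hd vs))"

definition is_tree :: "nat \<Rightarrow> (nat \<Rightarrow> nat \<Rightarrow> bool) \<Rightarrow> bool" where
  "is_tree n E \<longleftrightarrow> simple_graph n E \<and> connected_graph n E \<and> \<not> has_cycle E"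

definition independent_set :: "(nat \<Rightarrow> nat \<Rightarrow> bool) \<Rightarrow> nat set \<Rightarrow> bool" where
  "independent_set E S \<longleftrightarrow> (\<forall>u\<in>S. \<forall>v\<in>S. \<not> E u v)"

definition indep_poly :: "nat \<Rightarrow> (nat \<Rightarrow> nat \<Rightarrow> bool) \<Rightarrow> complex poly" where
  "indep_poly n E = (\<Sum>S\<in>{S. S \<subseteq> {0..<n} \<and> independent_set E S}. monom 1 (card S))"

definition M_T :: "nat \<Rightarrow> real" where
  "M_T n = Max {cmod z | z E. is_tree n E \<and> poly (indep_poly n E) z = 0}"

end

theory Submission
  imports Defs "HOL-Computational_Algebra.Fundamental_Theorem_Algebra" "HOL-Real_Asymp.Real_Asymp"
begin


definition Fk :: "nat \<Rightarrow> (nat \<Rightarrow> nat \<Rightarrow> bool) \<Rightarrow> nat \<Rightarrow> nat set set" where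
  "Fk n E k = {S. S \<subseteq> {0..<n} \<and> independent_set E S \<and> card S = k}"

lemma finite_Fk: "finite (Fk n E k)"
  unfolding Fk_def by (rule finite_subset[of _ "Pow {0..<n}"]) auto

lemma coeff_indep_poly: "coeff (indep_poly n E) k = of_nat (card (Fk n E k))"
proof -
  have fin: "finite {S. S \<subseteq> {0..<n} \<and> independent_set E S}"
    by (rule finite_subset[of _ "Pow {0..<n}"]) auto
  have "coeff (indep_poly n E) k = (\<Sum>S\<in>{S. S \<subseteq> {0..<n} \<and> independent_set E S}. if card S = k then 1 else 0)"
    unfolding indep_poly_def by (simp add: coeff_sum coeff_monom)
  also have "\<dots> = of_nat (card {S \<in> {S. S \<subseteq> {0..<n} \<and> independent_set E S}. card S = k})"
    using fin by (simp add: sum.If_cases) (rule arg_cong[where f=card], auto)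
  also have "{S \<in> {S. S \<subseteq> {0..<n} \<and> independent_set E S}. card S = k} = Fk n E k"
    unfolding Fk_def by auto
  finally show ?thesis .
qed

lemma Fk0: "Fk n E 0 = {{}}"
proof -
  have "S = {}" if "S \<subseteq> {0..<n}" "card S = 0" for S
    using that finite_subset[OF that(1)] by auto
  thus ?thesis unfolding Fk_def independent_set_def by auto
qed

lemma coeff0_indep: "coeff (indep_poly n E) 0 = 1"
  by (simp add: coeff_indep_poly Fk0)

lemma indep_poly_nz: "indep_poly n E \<noteq> 0"
  using coeff0_indep by (metis coeff_0 zero_neq_one)

lemma indep_le_degree:
  assumes "S \<subseteq> {0..<n}" "independent_set E S"
  shows "card S \<le> degree (indep_poly n E)"
proof -
  have "S \<in> Fk n E (card S)" using assms unfolding Fk_def by auto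
  hence "card (Fk n E (card S)) \<noteq> 0" using finite_Fk by (metis card_0_eq empty_iff)
  hence "coeff (indep_poly n E) (card S) \<noteq> 0" by (simp add: coeff_indep_poly)
  thus ?thesis by (rule le_degree)
qed

lemma lead_indep_ge1: "1 \<le> card (Fk n E (degree (indep_poly n E)))"
proof -
  have "coeff (indep_poly n E) (degree (indep_poly n E)) \<noteq> 0"
    using indep_poly_nz by simp
  thus ?thesis by (simp add: coeff_indep_poly)
qed

definition cwalk :: "(nat \<Rightarrow> nat \<Rightarrow> bool) \<Rightarrow> (nat \<Rightarrow> nat) \<Rightarrow> nat \<Rightarrow> bool" where
  "cwalk E f L \<longleftrightarrow> 1 \<le> L \<and> (\<forall>k. Suc k < L \<longrightarrow> E (f k) (f (Suc k))) \<and> E (f (L - 1)) (f 0)"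

lemma cwalk_inj_cycle:
  assumes irr: "\<forall>v. \<not> E v v" and cw: "cwalk E f L" and odd: "odd L" and inj: "inj_on f {..<L}"
  shows "has_cycle E"
proof -
  define vs where "vs = map f [0..<L]"
  have L1: "1 \<le> L" using cw unfolding cwalk_def by auto
  have "L \<noteq> 1"
  proof
    assume "L = 1" thus False using cw irr unfolding cwalk_def by auto
  qed
  with L1 odd have L3: "3 \<le> L" by presburger
  have "distinct vs" unfolding vs_def using inj by (simp add: distinct_map atLeast0LessThan)
  moreover have "\<forall>i. Suc i < length vs \<longrightarrow> E (vs ! i) (vs ! Suc i)"
    using cw unfolding vs_def cwalk_def by auto
  moreover have "last vs = f (L - 1)" "hd vs = f 0" unfolding vs_def using L1
    by (simp_all add: last_map hd_map)
  ultimately show ?thesis unfolding has_cycle_def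
    using L3 cw unfolding cwalk_def vs_def by (intro exI[of _ vs]) (auto simp: vs_def)
qed

lemma odd_cwalk_cycle:
  assumes irr: "\<forall>v. \<not> E v v"
  shows "cwalk E f L \<Longrightarrow> odd L \<Longrightarrow> has_cycle E"
proof (induction L arbitrary: f rule: less_induct)
  case (less L f)
  show ?case
  proof (cases "inj_on f {..<L}")
    case True
    then show ?thesis using cwalk_inj_cycle[OF irr less.prems(1,2)] by simp
  next
    case False
    then obtain i j where ij: "i < j" "j < L" "f i = f j"
      unfolding inj_on_def by (metis lessThan_iff nat_neq_iff)
    have w: "\<And>k. Suc k < L \<Longrightarrow> E (f k) (f (Suc k))" and c: "E (f (L - 1)) (f 0)"
      using less.prems(1) unfolding cwalk_def by auto
    define f1 where "f1 = (\<lambda>k. f (i + k))"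
    define L1 where "L1 = j - i"
    define f2 where "f2 = (\<lambda>k. if k < i then f k else f (k + (j - i)))"
    define L2 where "L2 = L - (j - i)"
    have cw1: "cwalk E f1 L1"
      unfolding cwalk_def f1_def L1_def
    proof (intro conjI allI impI)
      show "1 \<le> j - i" using ij by auto
      fix k assume "Suc k < j - i"
      thus "E (f (i + k)) (f (i + Suc k))" using w[of "i+k"] ij by auto
    next
      have "E (f (j - 1)) (f j)" using w[of "j - 1"] ij by auto
      thus "E (f (i + (j - i - 1))) (f (i + 0))" using ij by (simp add: Suc_diff_Suc)
    qed
    have cw2: "cwalk E f2 L2"
      unfolding cwalk_def L2_def
    proof (intro conjI allI impI)
      show "1 \<le> L - (j - i)" using ij by auto
      fix k assume k: "Suc k < L - (j - i)"
      show "E (f2 k) (f2 (Suc k))"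
      proof (cases "Suc k < i")
        case True thus ?thesis using w[of k] ij unfolding f2_def by auto
      next
        case False
        show ?thesis
        proof (cases "Suc k = i")
          case True
          hence "f2 k = f k" "f2 (Suc k) = f j" unfolding f2_def using ij by auto
          thus ?thesis using w[of k] True ij by auto
        next
          case False
          hence "f2 k = f (k + (j - i))" "f2 (Suc k) = f (Suc (k + (j - i)))"
            unfolding f2_def using \<open>\<not> Suc k < i\<close> by auto
          thus ?thesis using w[of "k + (j - i)"] k ij by auto
        qed
      qed
    next
      have a: "f2 (L - (j - i) - 1) = f (L - 1)" unfolding f2_def using ij by auto
      have b: "f2 0 = f 0" unfolding f2_def using ij by auto
      show "E (f2 (L - (j - i) - 1)) (f2 0)" using a b c by simp
    qed
    have "L1 + L2 = L" using ij unfolding L1_def L2_def by auto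
    hence "odd L1 \<or> odd L2" using less.prems(2) by (metis even_add)
    moreover have "L1 < L" "L2 < L" using ij unfolding L1_def L2_def by auto
    ultimately show ?thesis using less.IH cw1 cw2 by blast
  qed
qed

lemma walk_from:
  "E\<^sup>*\<^sup>* a v \<Longrightarrow> \<exists>f l. f 0 = a \<and> f l = v \<and> (\<forall>k<l. E (f k) (f (Suc k)))"
proof (induction rule: rtranclp_induct)
  case base
  show ?case by (rule exI[of _ "\<lambda>_. a"], rule exI[of _ 0]) auto
next
  case (step b c)
  then obtain f l where f: "f 0 = a" "f l = b" "\<forall>k<l. E (f k) (f (Suc k))" by blast
  show ?case
  proof (rule exI[of _ "f(Suc l := c)"], rule exI[of _ "Suc l"], intro conjI allI impI)
    fix k assume "k < Suc l"
    thus "E ((f(Suc l := c)) k) ((f(Suc l := c)) (Suc k))"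
      using f step.hyps(2) by (cases "k = l") auto
  qed (use f in auto)
qed

lemma tree_big_indep:
  assumes tr: "is_tree n E" and n1: "1 \<le> n"
  shows "\<exists>X \<subseteq> {0..<n}. independent_set E X \<and> n \<le> 2 * card X"
proof -
  have sg: "simple_graph n E" and con: "connected_graph n E" and nc: "\<not> has_cycle E"
    using tr unfolding is_tree_def by auto
  have sym: "\<And>u v. E u v \<Longrightarrow> E v u" and irr: "\<forall>v. \<not> E v v"
    using sg unfolding simple_graph_def by auto
  have ex: "\<forall>v. \<exists>l. v < n \<longrightarrow> (\<exists>f. f 0 = 0 \<and> f l = v \<and> (\<forall>k<l. E (f k) (f (Suc k))))"
  proof
    fix v
    show "\<exists>l. v < n \<longrightarrow> (\<exists>f. f 0 = 0 \<and> f l = v \<and> (\<forall>k<l. E (f k) (f (Suc k))))"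
    proof (cases "v < n")
      case True
      hence "E\<^sup>*\<^sup>* 0 v" using con n1 unfolding connected_graph_def by auto
      from walk_from[OF this] show ?thesis by blast
    qed auto
  qed
  from choice[OF ex] obtain L where L: "\<forall>v. v < n \<longrightarrow> (\<exists>f. f 0 = 0 \<and> f (L v) = v \<and> (\<forall>k<L v. E (f k) (f (Suc k))))"
    by blast
  have "\<forall>v. \<exists>f. v < n \<longrightarrow> f 0 = 0 \<and> f (L v) = v \<and> (\<forall>k<L v. E (f k) (f (Suc k)))"
    using L by blast
  from choice[OF this] obtain F where F: "\<forall>v. v < n \<longrightarrow> F v 0 = 0 \<and> F v (L v) = v \<and> (\<forall>k<L v. E (F v k) (F v (Suc k)))"
    by blast
  have LF: "\<And>v. v < n \<Longrightarrow> F v 0 = 0 \<and> F v (L v) = v \<and> (\<forall>k<L v. E (F v k) (F v (Suc k)))"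
    using F by blast
  have key: "\<not> E u v" if uv: "u < n" "v < n" "even (L u) = even (L v)" for u v
  proof
    assume e: "E u v"
    define g where "g = (\<lambda>k. if k \<le> L u then F u k else F v (L u + 1 + L v - k))"
    define Lg where "Lg = L u + 1 + L v"
    have Fu: "F u 0 = 0" "F u (L u) = u" "\<And>k. k < L u \<Longrightarrow> E (F u k) (F u (Suc k))"
      using LF[OF uv(1)] by auto
    have Fv: "F v 0 = 0" "F v (L v) = v" "\<And>k. k < L v \<Longrightarrow> E (F v k) (F v (Suc k))"
      using LF[OF uv(2)] by auto
    have "cwalk E g Lg"
      unfolding cwalk_def Lg_def
    proof (intro conjI allI impI)
      fix k assume k: "Suc k < L u + 1 + L v"
      show "E (g k) (g (Suc k))"
      proof (cases "k < L u")
        case True thus ?thesis using Fu(3)[of k] unfolding g_def by auto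
      next
        case False
        show ?thesis
        proof (cases "k = L u")
          case True
          thus ?thesis unfolding g_def using Fu(2) Fv(2) e by auto
        next
          case False
          define m where "m = L u + L v - k"
          have gk: "g k = F v (Suc m)" "g (Suc k) = F v m" "m < L v"
            unfolding g_def m_def using False \<open>\<not> k < L u\<close> k by (auto simp: Suc_diff_le)
          thus ?thesis using Fv(3)[of m] sym by auto
        qed
      qed
    next
      show "E (g (L u + 1 + L v - 1)) (g 0)"
      proof (cases "L v = 0")
        case True
        thus ?thesis unfolding g_def using Fu Fv e by auto
      next
        case False
        hence "g (L u + 1 + L v - 1) = F v 1" unfolding g_def by auto
        moreover have "g 0 = F v 0" unfolding g_def using Fu Fv by auto
        ultimately show ?thesis using Fv(3)[of 0] False sym by auto
      qed
    qed simp
    moreover have "odd Lg" unfolding Lg_def using uv(3) by auto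
    ultimately show False using odd_cwalk_cycle[of E, OF irr] nc by blast
  qed
  define X0 where "X0 = {v \<in> {0..<n}. even (L v)}"
  define X1 where "X1 = {v \<in> {0..<n}. odd (L v)}"
  have i0: "independent_set E X0" unfolding independent_set_def X0_def using key by auto
  have i1: "independent_set E X1" unfolding independent_set_def X1_def using key by auto
  have "X0 \<union> X1 = {0..<n}" "X0 \<inter> X1 = {}" unfolding X0_def X1_def by auto
  moreover have "card (X0 \<union> X1) = card X0 + card X1"
    by (rule card_Un_disjoint) (auto simp: X0_def X1_def)
  ultimately have "card X0 + card X1 = n" by simp
  hence "n \<le> 2 * card X0 \<or> n \<le> 2 * card X1" by linarith
  moreover have "X0 \<subseteq> {0..<n}" "X1 \<subseteq> {0..<n}" unfolding X0_def X1_def by auto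
  ultimately show ?thesis using i0 i1 by blast
qed



lemma count_bound:
  assumes Xs: "X \<subseteq> {0..<n}" and iX: "independent_set E X"
    and amax: "\<And>S. S \<subseteq> {0..<n} \<Longrightarrow> independent_set E S \<Longrightarrow> card S \<le> a"
    and ja: "j \<le> a" and n1: "1 \<le> n"
  shows "card (Fk n E (a - j)) \<le> 2 ^ (n - card X) * n ^ j"
proof -
  define Y where "Y = {0..<n} - X"
  have finX: "finite X" using Xs finite_subset by blast
  have finY: "finite Y" unfolding Y_def by simp
  have cY: "card Y = n - card X" unfolding Y_def using Xs finX by (simp add: card_Diff_subset)
  define G where "G T = {S \<in> Fk n E (a - j). S \<inter> Y = T}" for T
  have U: "Fk n E (a - j) = (\<Union>T\<in>Pow Y. G T)" unfolding G_def Fk_def Y_def by auto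
  have GT: "card (G T) \<le> n ^ j" if T: "T \<subseteq> Y" for T
  proof (cases "G T = {}")
    case True thus ?thesis by simp
  next
    case False
    then obtain S0 where S0: "S0 \<in> G T" by blast
    define XT where "XT = {x \<in> X. \<forall>t\<in>T. \<not> E x t \<and> \<not> E t x}"
    have S0p: "S0 \<subseteq> {0..<n}" "independent_set E S0" "card S0 = a - j" "S0 \<inter> Y = T"
      using S0 unfolding G_def Fk_def by auto
    have TS0: "T \<subseteq> S0" using S0p(4) by auto
    have finXT: "finite XT" unfolding XT_def using finX by auto
    have fT: "finite T" using T finY finite_subset by blast
    have XTn: "XT \<subseteq> {0..<n}" using Xs unfolding XT_def by auto
    have XTT: "card XT + card T \<le> a"
    proof -
      have "XT \<union> T \<subseteq> {0..<n}" using Xs T unfolding XT_def Y_def by auto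
      moreover have "independent_set E (XT \<union> T)"
        using iX S0p(2) TS0 unfolding independent_set_def XT_def by blast
      ultimately have "card (XT \<union> T) \<le> a" by (rule amax)
      moreover have "XT \<inter> T = {}" using T unfolding XT_def Y_def by auto
      ultimately show ?thesis using card_Un_disjoint[OF finXT fT] by simp
    qed
    have decomp: "S = (S \<inter> X) \<union> T" if "S \<in> G T" for S
      using that unfolding G_def Fk_def Y_def by auto
    have splitS: "card S = card (S \<inter> X) + card T" if "S \<in> G T" for S
    proof -
      have "S \<subseteq> {0..<n}" using that unfolding G_def Fk_def by auto
      hence "finite S" using finite_subset by blast
      have "card ((S \<inter> X) \<union> T) = card (S \<inter> X) + card T"
        by (rule card_Un_disjoint) (use \<open>finite S\<close> fT T in \<open>auto simp: Y_def\<close>)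
      thus ?thesis using decomp[OF that] by simp
    qed
    define b where "b = card (S0 \<inter> X)"
    have bdef: "a - j = b + card T" using splitS[OF S0] S0p(3) b_def by simp
    have inj: "inj_on (\<lambda>S. S \<inter> X) (G T)"
    proof (rule inj_onI)
      fix S S' assume "S \<in> G T" "S' \<in> G T" "S \<inter> X = S' \<inter> X"
      thus "S = S'" using decomp by metis
    qed
    have sub: "S \<inter> X \<subseteq> XT" if "S \<in> G T" for S
    proof -
      have "independent_set E S" "T \<subseteq> S" using that unfolding G_def Fk_def by auto
      thus ?thesis unfolding XT_def independent_set_def by blast
    qed
    have img: "(\<lambda>S. S \<inter> X) ` G T \<subseteq> {U. U \<subseteq> XT \<and> card U = b}"
    proof
      fix U assume "U \<in> (\<lambda>S. S \<inter> X) ` G T"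
      then obtain S where S: "S \<in> G T" "U = S \<inter> X" by blast
      have "card S = a - j" using S(1) unfolding G_def Fk_def by auto
      hence "card U = b" using splitS[OF S(1)] bdef S(2) by simp
      thus "U \<in> {U. U \<subseteq> XT \<and> card U = b}" using sub[OF S(1)] S(2) by auto
    qed
    have bXT: "b \<le> card XT" unfolding b_def using sub[OF S0] finXT by (rule card_mono[rotated])
    have "card (G T) = card ((\<lambda>S. S \<inter> X) ` G T)" using card_image[OF inj] by simp
    also have "\<dots> \<le> card {U. U \<subseteq> XT \<and> card U = b}"
      by (rule card_mono[OF _ img]) (rule finite_subset[of _ "Pow XT"], auto simp: finXT)
    also have "\<dots> = card XT choose b" using n_subsets[OF finXT] by simp
    also have "\<dots> = card XT choose (card XT - b)" using bXT by (rule binomial_symmetric)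
    also have "\<dots> \<le> card XT ^ (card XT - b)" by (rule binomial_le_pow) simp
    also have "\<dots> \<le> n ^ (card XT - b)"
      by (rule power_mono) (use card_mono[OF _ XTn] in auto)
    also have "\<dots> \<le> n ^ j"
      by (rule power_increasing) (use XTT bdef ja n1 in auto)
    finally show ?thesis .
  qed
  have "card (Fk n E (a - j)) \<le> (\<Sum>T\<in>Pow Y. card (G T))" unfolding U
    by (rule card_UN_le) (simp add: finY)
  also have "\<dots> \<le> (\<Sum>T\<in>Pow Y. n ^ j)" by (rule sum_mono) (use GT in auto)
  also have "\<dots> = 2 ^ card Y * n ^ j" using card_Pow[OF finY] by simp
  finally show ?thesis using cY by simp
qed

lemma T_bound:
  fixes N R :: real
  assumes N0: "0 \<le> N" and NR: "2 * N \<le> R"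
  shows "(\<Sum>k<d. N ^ (d - k) * R ^ k) * R \<le> 2 * N * R ^ d"
proof (induction d)
  case 0 thus ?case using N0 by simp
next
  case (Suc d)
  have R0: "0 \<le> R" using N0 NR by linarith
  have "(\<Sum>k<Suc d. N ^ (Suc d - k) * R ^ k) = (\<Sum>k<d. N * (N ^ (d - k) * R ^ k)) + N * R ^ d"
    by (simp add: Suc_diff_le mult.assoc)
  also have "\<dots> = N * (\<Sum>k<d. N ^ (d - k) * R ^ k) + N * R ^ d" by (simp add: sum_distrib_left)
  finally have e: "(\<Sum>k<Suc d. N ^ (Suc d - k) * R ^ k) * R = N * ((\<Sum>k<d. N ^ (d - k) * R ^ k) * R) + N * R ^ d * R"
    by (simp add: algebra_simps)
  have "N * ((\<Sum>k<d. N ^ (d - k) * R ^ k) * R) \<le> N * (2 * N * R ^ d)"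
    using Suc N0 by (intro mult_left_mono)
  also have "\<dots> \<le> N * (R * R ^ d)"
    using NR N0 R0 by (intro mult_left_mono mult_right_mono) auto
  finally have f: "N * ((\<Sum>k<d. N ^ (d - k) * R ^ k) * R) \<le> N * (R * R ^ d)" .
  have "(\<Sum>k<Suc d. N ^ (Suc d - k) * R ^ k) * R \<le> N * (R * R ^ d) + N * R ^ d * R"
    using e f by linarith
  also have "N * (R * R ^ d) + N * R ^ d * R = 2 * N * R ^ Suc d" by (simp add: algebra_simps)
  finally show ?case .
qed

lemma root_bound:
  fixes p :: "complex poly" and A N :: real
  assumes lead: "1 \<le> norm (coeff p (degree p))"
    and cb: "\<And>k. k < degree p \<Longrightarrow> norm (coeff p k) \<le> A * N ^ (degree p - k)"
    and A1: "1 \<le> A" and N0: "0 \<le> N" and root: "poly p z = 0"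
  shows "norm z \<le> 2 * N * A"
proof (rule ccontr)
  assume "\<not> ?thesis"
  hence big: "2 * N * A < norm z" by simp
  define R where "R = norm z"
  define d where "d = degree p"
  have NA: "2 * N \<le> 2 * N * A" using A1 N0 mult_left_mono[of 1 A N] by simp
  have R0: "0 < R" using big NA N0 unfolding R_def by linarith
  have RN: "2 * N \<le> R" using big NA unfolding R_def by linarith
  have "poly p z = (\<Sum>i<d. coeff p i * z ^ i) + coeff p d * z ^ d"
    unfolding poly_altdef d_def by (simp add: lessThan_Suc_atMost[symmetric])
  hence "(\<Sum>i<d. coeff p i * z ^ i) + coeff p d * z ^ d = 0" using root by simp
  hence eq: "coeff p d * z ^ d = - (\<Sum>i<d. coeff p i * z ^ i)"
    by (metis add.commute eq_neg_iff_add_eq_0)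
  have "R ^ d \<le> norm (coeff p d) * R ^ d" using lead R0 unfolding d_def by simp
  also have "\<dots> = norm (\<Sum>i<d. coeff p i * z ^ i)"
    using arg_cong[OF eq, of norm] by (simp add: norm_mult norm_power R_def)
  also have "\<dots> \<le> (\<Sum>i<d. norm (coeff p i) * R ^ i)"
    by (rule order_trans[OF norm_sum]) (simp add: norm_mult norm_power R_def)
  also have "\<dots> \<le> (\<Sum>i<d. A * N ^ (d - i) * R ^ i)"
    by (rule sum_mono) (use cb R0 in \<open>auto intro!: mult_right_mono simp: d_def\<close>)
  also have "\<dots> = A * (\<Sum>i<d. N ^ (d - i) * R ^ i)" by (simp add: sum_distrib_left mult.assoc)
  finally have "R ^ d * R \<le> A * ((\<Sum>i<d. N ^ (d - i) * R ^ i) * R)"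
    using R0 by (simp add: mult_right_mono mult.assoc)
  also have "\<dots> \<le> A * (2 * N * R ^ d)"
    using T_bound[OF N0 RN] A1 by (intro mult_left_mono) auto
  finally have "R ^ d * R \<le> (2 * N * A) * R ^ d" by (simp add: algebra_simps)
  hence "R \<le> 2 * N * A" using R0 by (simp add: mult.commute)
  thus False using big unfolding R_def by simp
qed

lemma tree_root_bound:
  assumes tr: "is_tree n E" and n1: "1 \<le> n" and root: "poly (indep_poly n E) z = 0"
  shows "cmod z \<le> 2 * real n * 2 powr (real n / 2)"
proof -
  obtain X where X: "X \<subseteq> {0..<n}" "independent_set E X" "n \<le> 2 * card X"
    using tree_big_indep[OF tr n1] by blast
  define p where "p = indep_poly n E"
  define a where "a = degree p"
  have amax: "\<And>S. S \<subseteq> {0..<n} \<Longrightarrow> independent_set E S \<Longrightarrow> card S \<le> a"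
    unfolding a_def p_def by (rule indep_le_degree)
  have lead: "1 \<le> norm (coeff p (degree p))"
    using lead_indep_ge1[of n E] unfolding p_def by (simp add: coeff_indep_poly)
  have cb: "norm (coeff p k) \<le> 2 ^ (n - card X) * real n ^ (degree p - k)" if "k < degree p" for k
  proof -
    have "card (Fk n E (a - (a - k))) \<le> 2 ^ (n - card X) * n ^ (a - k)"
      by (rule count_bound[OF X(1,2) amax _ n1]) auto
    moreover have "a - (a - k) = k" using that a_def by simp
    ultimately have "real (card (Fk n E k)) \<le> real (2 ^ (n - card X) * n ^ (a - k))"
      by (metis of_nat_le_iff)
    thus ?thesis unfolding p_def a_def by (simp add: coeff_indep_poly)
  qed
  have "cmod z \<le> 2 * real n * 2 ^ (n - card X)"
    by (rule root_bound[OF lead cb _ _ root[folded p_def]]) auto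
  also have "(2::real) ^ (n - card X) = 2 powr real (n - card X)"
    by (simp add: powr_realpow)
  also have "\<dots> \<le> 2 powr (real n / 2)"
    by (rule powr_mono) (use X(3) in auto)
  finally show ?thesis using n1 by (simp add: mult_left_mono)
qed



definition ptree :: "nat \<Rightarrow> (nat \<Rightarrow> nat) \<Rightarrow> nat \<Rightarrow> nat \<Rightarrow> bool" where
  "ptree n par u v \<longleftrightarrow> u < n \<and> v < n \<and> ((0 < u \<and> v = par u) \<or> (0 < v \<and> u = par v))"

lemma cycle_nbrs:
  assumes hc: "has_cycle E" and sym: "\<And>u v. E u v \<Longrightarrow> E v u"
  shows "\<exists>C. finite C \<and> C \<noteq> {} \<and> (\<forall>x\<in>C. \<exists>y\<in>C. \<exists>y'\<in>C. y \<noteq> y' \<and> E x y \<and> E x y')"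
proof -
  obtain vs where vs: "length vs \<ge> 3" "distinct vs"
      "\<forall>i. Suc i < length vs \<longrightarrow> E (vs!i) (vs! Suc i)" "E (last vs) (hd vs)"
    using hc unfolding has_cycle_def by blast
  define L where "L = length vs"
  have L3: "3 \<le> L" using vs(1) L_def by simp
  have ne: "vs \<noteq> []" using vs(1) by auto
  have hd: "hd vs = vs ! 0" and last: "last vs = vs ! (L - 1)"
    using ne by (simp_all add: hd_conv_nth last_conv_nth L_def)
  have step: "\<And>i. Suc i < L \<Longrightarrow> E (vs!i) (vs! Suc i)" using vs(3) L_def by auto
  have neq: "\<And>a b. a < L \<Longrightarrow> b < L \<Longrightarrow> a \<noteq> b \<Longrightarrow> vs!a \<noteq> vs!b"
    using vs(2) by (simp add: nth_eq_iff_index_eq L_def)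
  have mem: "\<And>a. a < L \<Longrightarrow> vs ! a \<in> set vs" by (simp add: L_def)
  have "\<forall>x\<in>set vs. \<exists>y\<in>set vs. \<exists>y'\<in>set vs. y \<noteq> y' \<and> E x y \<and> E x y'"
  proof
    fix x assume "x \<in> set vs"
    then obtain i where i: "i < L" "x = vs ! i" by (auto simp: in_set_conv_nth L_def)
    consider "i = 0" | "0 < i \<and> i < L - 1" | "i = L - 1" using i by linarith
    then show "\<exists>y\<in>set vs. \<exists>y'\<in>set vs. y \<noteq> y' \<and> E x y \<and> E x y'"
    proof cases
      case 1
      have "E x (vs!1)" using step[of 0] 1 i L3 by auto
      moreover have "E x (vs!(L-1))" using vs(4) sym hd last 1 i by auto
      moreover have "vs!1 \<noteq> vs!(L-1)" using neq L3 by auto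
      moreover have "vs!1 \<in> set vs" "vs!(L-1) \<in> set vs" using mem L3 by auto
      ultimately show ?thesis by blast
    next
      case 2
      have "E (vs!(i-1)) (vs!i)" using step[of "i-1"] 2 by auto
      hence "E x (vs!(i-1))" using sym i by auto
      moreover have "E x (vs!(i+1))" using step[of i] 2 i by auto
      moreover have "vs!(i-1) \<noteq> vs!(i+1)" using neq 2 by auto
      moreover have "vs!(i-1) \<in> set vs" "vs!(i+1) \<in> set vs" using mem 2 by auto
      ultimately show ?thesis by blast
    next
      case 3
      have "E (vs!(L-2)) (vs!(L-1))" using step[of "L-2"] L3 by (auto simp: Suc_diff_Suc numeral_2_eq_2)
      hence "E x (vs!(L-2))" using sym i 3 by auto
      moreover have "E x (vs!0)" using vs(4) hd last 3 i by auto
      moreover have "vs!(L-2) \<noteq> vs!0" using neq L3 by auto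
      moreover have "vs!(L-2) \<in> set vs" "vs!0 \<in> set vs" using mem L3 by auto
      ultimately show ?thesis by blast
    qed
  qed
  moreover have "set vs \<noteq> {}" using vs(1) by auto
  ultimately show ?thesis by (intro exI[of _ "set vs"]) auto
qed

lemma ptree_is_tree:
  assumes par: "\<And>w. 0 < w \<Longrightarrow> w < n \<Longrightarrow> par w < w"
  shows "is_tree n (ptree n par)"
proof -
  let ?E = "ptree n par"
  have irr: "\<not> ?E v v" for v
  proof
    assume h: "?E v v"
    hence "v < n" "0 < v" "v = par v" unfolding ptree_def by auto
    thus False using par[of v] by simp
  qed
  have sg: "simple_graph n ?E" unfolding simple_graph_def
    using irr by (auto simp: ptree_def)
  have up: "?E\<^sup>*\<^sup>* v 0 \<and> ?E\<^sup>*\<^sup>* 0 v" if "v < n" for v using that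
  proof (induction v rule: less_induct)
    case (less v)
    show ?case
    proof (cases "v = 0")
      case True thus ?thesis by simp
    next
      case False
      hence pv: "par v < v" using par less.prems by auto
      hence ih: "?E\<^sup>*\<^sup>* (par v) 0 \<and> ?E\<^sup>*\<^sup>* 0 (par v)" using less.IH less.prems by auto
      have e1: "?E v (par v)" and e2: "?E (par v) v"
        unfolding ptree_def using False less.prems pv by auto
      have "?E\<^sup>*\<^sup>* v 0" using ih e1 by (meson converse_rtranclp_into_rtranclp)
      moreover have "?E\<^sup>*\<^sup>* 0 v" using ih e2 by (meson rtranclp.rtrancl_into_rtrancl)
      ultimately show ?thesis by blast
    qed
  qed
  have symE: "\<And>u v. ?E u v \<Longrightarrow> ?E v u" unfolding ptree_def by auto
  have con: "connected_graph n ?E" unfolding connected_graph_def using up by (meson rtranclp_trans)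
  have nc: "\<not> has_cycle ?E"
  proof
    assume "has_cycle ?E"
    then obtain C where C: "finite C" "C \<noteq> {}" "\<forall>x\<in>C. \<exists>y\<in>C. \<exists>y'\<in>C. y\<noteq>y' \<and> ?E x y \<and> ?E x y'"
      using cycle_nbrs[of ?E] symE by blast
    define x where "x = Max C"
    have xC: "x \<in> C" using C x_def by auto
    have xmax: "\<And>y. y \<in> C \<Longrightarrow> y \<le> x" using C x_def by auto
    obtain y y' where yy: "y\<in>C" "y'\<in>C" "y\<noteq>y'" "?E x y" "?E x y'" using C(3) xC by blast
    have pa: "y = par x" if "y \<in> C" "?E x y" for y
    proof -
      have "y \<le> x" using xmax that(1) .
      moreover have "\<not> (0 < y \<and> x = par y)" using par[of y] that(2) \<open>y \<le> x\<close> unfolding ptree_def by auto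
      ultimately show ?thesis using that(2) unfolding ptree_def by auto
    qed
    show False using pa[OF yy(1,4)] pa[OF yy(2,5)] yy(3) by simp
  qed
  show ?thesis unfolding is_tree_def using sg con nc by auto
qed

lemma ptree_indep:
  assumes Sn: "S \<subseteq> {0..<n}"
  shows "independent_set (ptree n par) S \<longleftrightarrow> (\<forall>w\<in>S. 0 < w \<longrightarrow> par w \<notin> S)"
proof
  assume h: "independent_set (ptree n par) S"
  show "\<forall>w\<in>S. 0 < w \<longrightarrow> par w \<notin> S"
  proof (intro ballI impI notI)
    fix w assume w: "w \<in> S" "0 < w" "par w \<in> S"
    have "ptree n par w (par w)" unfolding ptree_def using Sn w by auto
    thus False using h w unfolding independent_set_def by blast
  qed
next
  assume h: "\<forall>w\<in>S. 0 < w \<longrightarrow> par w \<notin> S"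
  thus "independent_set (ptree n par) S" unfolding independent_set_def ptree_def by auto
qed



definition spar :: "nat \<Rightarrow> nat \<Rightarrow> nat" where
  "spar m w = (if w \<le> m then 0 else if w \<le> 2 * m then w - m else 1)"

lemma spar_lt: "1 \<le> m \<Longrightarrow> 0 < w \<Longrightarrow> spar m w < w"
  unfolding spar_def by auto

lemma spider_max:
  assumes m1: "1 \<le> m" and mn: "2 * m < n" and Sn: "S \<subseteq> {0..<n}"
    and ind: "\<forall>w\<in>S. 0 < w \<longrightarrow> spar m w \<notin> S"
  shows "card S \<le> n - m \<and> (card S = n - m \<longrightarrow> S = insert 0 {m<..<n})"
proof -
  define St where "St = insert 0 {m<..<n}"
  have finSt: "finite St" unfolding St_def by simp
  have cSt: "card St = n - m" unfolding St_def using mn by simp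
  have finS: "finite S" using Sn finite_subset by blast
  define A where "A = S \<inter> {1..m}"
  have finA: "finite A" unfolding A_def using finS by simp
  have SA: "S = (S \<inter> St) \<union> A" "(S \<inter> St) \<inter> A = {}" using Sn unfolding A_def St_def by auto
  have cS: "card S = card (S \<inter> St) + card A"
    using card_Un_disjoint[of "S \<inter> St" A] finS finA SA by simp
  have cSt2: "card St = card (S \<inter> St) + card (St - S)"
    using card_Un_disjoint[of "S \<inter> St" "St - S"] finSt
    by (metis Int_Diff_Un Int_Diff_disjoint Int_commute card_Un_disjoint finite_Diff finite_Int)
  show ?thesis
  proof (cases "A = {}")
    case True
    hence sub: "S \<subseteq> St" using SA by auto
    have "card S \<le> card St" using card_mono[OF finSt sub] .
    moreover have "card S = card St \<longrightarrow> S = St" using card_subset_eq[OF finSt sub] by blast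
    ultimately show ?thesis using cSt St_def by simp
  next
    case False
    then obtain i0 where i0: "i0 \<in> A" by blast
    have inj: "inj_on (\<lambda>i. i + m) A" by (auto intro: inj_onI)
    have z: "0 \<notin> S"
    proof
      assume "0 \<in> S"
      have "i0 \<in> S" "0 < i0" "spar m i0 = 0" using i0 unfolding A_def spar_def by auto
      thus False using ind \<open>0 \<in> S\<close> by metis
    qed
    have img: "insert 0 ((\<lambda>i. i + m) ` A) \<subseteq> St - S"
    proof
      fix w assume "w \<in> insert 0 ((\<lambda>i. i + m) ` A)"
      then consider "w = 0" | i where "i \<in> A" "w = i + m" by blast
      thus "w \<in> St - S"
      proof cases
        case 1 thus ?thesis using z unfolding St_def by auto
      next
        case 2
        have iS: "i \<in> S" "1 \<le> i" "i \<le> m" using 2 unfolding A_def by auto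
        have sp: "spar m (i + m) = i" using iS unfolding spar_def by auto
        have "i + m \<notin> S" using ind sp iS by auto
        moreover have "i + m \<in> St" unfolding St_def using iS mn by auto
        ultimately show ?thesis using 2 by auto
      qed
    qed
    have "0 \<notin> (\<lambda>i. i + m) ` A" using m1 by auto
    hence "card (insert 0 ((\<lambda>i. i + m) ` A)) = card A + 1"
      using card_image[OF inj] finA by simp
    moreover have "card (insert 0 ((\<lambda>i. i + m) ` A)) \<le> card (St - S)"
      using card_mono[OF _ img] finSt by simp
    ultimately have "card A < card (St - S)" by simp
    hence "card S < card St" using cS cSt2 by simp
    thus ?thesis using cSt by simp
  qed
qed

definition fam :: "nat \<Rightarrow> nat \<Rightarrow> nat set \<Rightarrow> nat set" where
  "fam m n T = insert (m + 1) ({2 * m<..<n} \<union> (\<lambda>i. if i \<in> T then i else m + i) ` {2..m})"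

lemma fam_props:
  assumes T: "T \<subseteq> {2..m}" and m1: "1 \<le> m" and mn: "2 * m < n"
  shows "fam m n T \<subseteq> {0..<n}" "\<forall>w\<in>fam m n T. 0 < w \<longrightarrow> spar m w \<notin> fam m n T"
    "card (fam m n T) = n - m - 1" "fam m n T \<inter> {2..m} = T"
proof -
  define g where "g = (\<lambda>i. if i \<in> T then i else m + i)"
  have fd: "fam m n T = insert (m + 1) ({2 * m<..<n} \<union> g ` {2..m})" unfolding fam_def g_def ..
  show "fam m n T \<subseteq> {0..<n}" unfolding fd g_def using mn m1 by auto
  show "\<forall>w\<in>fam m n T. 0 < w \<longrightarrow> spar m w \<notin> fam m n T"
  proof (intro ballI impI)
    fix w assume w: "w \<in> fam m n T" "0 < w"
    have "w = m + 1 \<or> w \<in> {2 * m<..<n} \<or> (\<exists>i\<in>{2..m}. w = g i)" using w(1) unfolding fd by auto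
    thus "spar m w \<notin> fam m n T"
    proof (elim disjE bexE)
      assume "w = m + 1"
      hence "spar m w = 1" unfolding spar_def using m1 by auto
      thus ?thesis unfolding fd g_def using m1 by auto
    next
      assume "w \<in> {2 * m<..<n}"
      hence "spar m w = 1" unfolding spar_def by auto
      thus ?thesis unfolding fd g_def using m1 by auto
    next
      fix i assume i: "i \<in> {2..m}" "w = g i"
      show ?thesis
      proof (cases "i \<in> T")
        case True
        hence "w = i" using i unfolding g_def by simp
        hence "spar m w = 0" unfolding spar_def using i by auto
        thus ?thesis unfolding fd g_def using m1 by auto
      next
        case False
        hence "w = m + i" using i unfolding g_def by simp
        hence "spar m w = i" unfolding spar_def using i by auto
        moreover have "i \<notin> fam m n T" unfolding fd g_def using i False by auto
        ultimately show ?thesis by simp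
      qed
    qed
  qed
  have inj: "inj_on g {2..m}" unfolding g_def by (auto intro!: inj_onI split: if_splits)
  have cg: "card (g ` {2..m}) = m - 1" using card_image[OF inj] by simp
  have d1: "{2 * m<..<n} \<inter> g ` {2..m} = {}" unfolding g_def by auto
  have "card ({2 * m<..<n} \<union> g ` {2..m}) = (n - Suc (2 * m)) + (m - 1)"
    using card_Un_disjoint[OF _ _ d1] cg by simp
  moreover have "m + 1 \<notin> {2 * m<..<n} \<union> g ` {2..m}" unfolding g_def using m1 by auto
  ultimately show "card (fam m n T) = n - m - 1" unfolding fd using mn m1 by simp
  show "fam m n T \<inter> {2..m} = T" unfolding fd g_def using T by auto
qed

lemma spider_coeffs:
  assumes m1: "1 \<le> m" and mn: "2 * m < n"
  shows "degree (indep_poly n (ptree n (spar m))) = n - m"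
    "coeff (indep_poly n (ptree n (spar m))) (n - m) = 1"
    "2 ^ (m - 1) \<le> card (Fk n (ptree n (spar m)) (n - m - 1))"
proof -
  let ?E = "ptree n (spar m)"
  let ?p = "indep_poly n ?E"
  define St where "St = insert 0 {m<..<n}"
  have Stn: "St \<subseteq> {0..<n}" unfolding St_def using mn by auto
  have "\<forall>w\<in>St. 0 < w \<longrightarrow> spar m w \<notin> St" unfolding St_def spar_def using m1 by auto
  hence Sti: "independent_set ?E St" using ptree_indep[OF Stn] by blast
  have cSt: "card St = n - m" unfolding St_def using mn by simp
  have mx: "card S \<le> n - m \<and> (card S = n - m \<longrightarrow> S = St)" if "S \<in> Fk n ?E k" for S k
  proof -
    have S: "S \<subseteq> {0..<n}" "independent_set ?E S" using that unfolding Fk_def by auto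
    hence "\<forall>w\<in>S. 0 < w \<longrightarrow> spar m w \<notin> S" using ptree_indep[OF S(1)] by blast
    thus ?thesis using spider_max[OF m1 mn S(1)] unfolding St_def by simp
  qed
  have "\<forall>i>n - m. coeff ?p i = 0"
  proof (intro allI impI)
    fix i assume "n - m < i"
    have "S \<notin> Fk n ?E i" for S
    proof
      assume h: "S \<in> Fk n ?E i"
      from mx[OF h] have "card S \<le> n - m" by simp
      moreover have "card S = i" using h unfolding Fk_def by simp
      ultimately show False using \<open>n - m < i\<close> by simp
    qed
    hence "Fk n ?E i = {}" by blast
    thus "coeff ?p i = 0" by (simp add: coeff_indep_poly)
  qed
  hence "degree ?p \<le> n - m" by (rule degree_le)
  moreover have "n - m \<le> degree ?p" using indep_le_degree[OF Stn Sti] cSt by simp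
  ultimately show "degree ?p = n - m" by simp
  have "Fk n ?E (n - m) = {St}"
  proof
    show "Fk n ?E (n - m) \<subseteq> {St}"
    proof
      fix S assume h: "S \<in> Fk n ?E (n - m)"
      hence "card S = n - m" unfolding Fk_def by simp
      thus "S \<in> {St}" using mx[OF h] by simp
    qed
    show "{St} \<subseteq> Fk n ?E (n - m)" using Stn Sti cSt unfolding Fk_def by simp
  qed
  thus "coeff ?p (n - m) = 1" by (simp add: coeff_indep_poly)
  have "card (Pow {2..m}) \<le> card (Fk n ?E (n - m - 1))"
  proof (rule card_inj_on_le[where f = "fam m n"])
    show "inj_on (fam m n) (Pow {2..m})"
    proof (rule inj_onI)
      fix T T' assume T: "T \<in> Pow {2..m}" "T' \<in> Pow {2..m}" "fam m n T = fam m n T'"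
      have "T = fam m n T \<inter> {2..m}" using fam_props(4)[OF _ m1 mn] T(1) by simp
      also have "\<dots> = fam m n T' \<inter> {2..m}" using T(3) by simp
      also have "\<dots> = T'" using fam_props(4)[OF _ m1 mn] T(2) by simp
      finally show "T = T'" .
    qed
    show "fam m n ` Pow {2..m} \<subseteq> Fk n ?E (n - m - 1)"
    proof
      fix S assume "S \<in> fam m n ` Pow {2..m}"
      then obtain T where T: "T \<subseteq> {2..m}" "S = fam m n T" by blast
      show "S \<in> Fk n ?E (n - m - 1)"
        unfolding Fk_def using fam_props[OF T(1) m1 mn] ptree_indep[OF fam_props(1)[OF T(1) m1 mn]] T(2)
        by auto
    qed
  qed (rule finite_Fk)
  thus "2 ^ (m - 1) \<le> card (Fk n ?E (n - m - 1))" by (simp add: card_Pow)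
qed



lemma coeff_linprod:
  fixes A :: "complex multiset"
  shows "coeff (\<Prod>x\<in>#A. [:-x,1:]) (size A) = 1 \<and>
         (\<forall>k>size A. coeff (\<Prod>x\<in>#A. [:-x,1:]) k = 0) \<and>
         (1 \<le> size A \<longrightarrow> coeff (\<Prod>x\<in>#A. [:-x,1:]) (size A - 1) = - sum_mset A)"
proof (induction A)
  case empty
  show ?case by (auto simp: coeff_1)
next
  case (add a A)
  define P where "P = (\<Prod>x\<in>#A. [:-x,1:])"
  define s where "s = size A"
  have IH: "coeff P s = 1" "\<And>k. k > s \<Longrightarrow> coeff P k = 0"
    "1 \<le> s \<Longrightarrow> coeff P (s - 1) = - sum_mset A"
    using add.IH unfolding P_def s_def by auto
  have eq: "(\<Prod>x\<in>#add_mset a A. [:-x,1:]) = pCons 0 P - smult a P"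
    unfolding P_def by simp
  have c: "coeff (\<Prod>x\<in>#add_mset a A. [:-x,1:]) k = (if k = 0 then 0 else coeff P (k - 1)) - a * coeff P k" for k
    unfolding eq by (simp add: coeff_pCons')
  have 1: "coeff (\<Prod>x\<in>#add_mset a A. [:-x,1:]) (size (add_mset a A)) = 1"
    unfolding c using IH(1,2) by (simp add: s_def)
  have 2: "\<forall>k>size (add_mset a A). coeff (\<Prod>x\<in>#add_mset a A. [:-x,1:]) k = 0"
    unfolding c using IH(2) by (simp add: s_def)
  have 3: "coeff (\<Prod>x\<in>#add_mset a A. [:-x,1:]) (size (add_mset a A) - 1) = - sum_mset (add_mset a A)"
  proof (cases "s = 0")
    case True
    hence "A = {#}" unfolding s_def by simp
    thus ?thesis unfolding c using IH(1) True by (simp add: s_def P_def)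
  next
    case False
    have hs: "size (add_mset a A) - 1 = s" by (simp add: s_def)
    have "coeff (\<Prod>x\<in>#add_mset a A. [:-x,1:]) s = coeff P (s - 1) - a * coeff P s"
      using c[of s] False by simp
    also have "\<dots> = - sum_mset A - a" using IH(1) IH(3) False by simp
    also have "\<dots> = - sum_mset (add_mset a A)" by simp
    finally show ?thesis unfolding hs .
  qed
  show ?case using 1 2 3 by blast
qed

lemma sum_mset_norm:
  fixes R :: "complex multiset"
  shows "R \<noteq> {#} \<Longrightarrow> \<exists>z\<in>#R. norm (sum_mset R) \<le> real (size R) * norm z"
proof (induction R)
  case empty thus ?case by simp
next
  case (add a R)
  show ?case
  proof (cases "R = {#}")
    case True thus ?thesis by simp
  next
    case False
    then obtain z0 where z0: "z0 \<in># R" "norm (sum_mset R) \<le> real (size R) * norm z0"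
      using add.IH by blast
    define z where "z = (if norm a \<le> norm z0 then z0 else a)"
    have zin: "z \<in># add_mset a R" unfolding z_def using z0 by auto
    have "norm (sum_mset (add_mset a R)) \<le> norm a + norm (sum_mset R)"
      by (simp add: norm_triangle_ineq)
    also have "\<dots> \<le> norm z + real (size R) * norm z"
      using z0(2) mult_left_mono[of "norm z0" "norm z" "real (size R)"] unfolding z_def by auto
    also have "\<dots> = real (size (add_mset a R)) * norm z" by (simp add: algebra_simps)
    finally show ?thesis using zin by blast
  qed
qed

lemma vieta_root:
  fixes p :: "complex poly"
  assumes dp: "degree p = d" and d1: "1 \<le> d" and lc: "coeff p d = 1"
  shows "\<exists>z. poly p z = 0 \<and> norm (coeff p (d - 1)) \<le> real d * norm z"
proof -
  have pnz: "p \<noteq> 0" using lc by auto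
  define R where "R = proots p"
  have sR: "size R = d" unfolding R_def using size_proots_complex dp by simp
  have "smult (lead_coeff p) (\<Prod>x\<in>#R. [:-x, 1:]) = p"
    unfolding R_def by (rule complex_poly_decompose_multiset)
  hence pe: "p = (\<Prod>x\<in>#R. [:-x, 1:])" using lc dp by simp
  have "coeff p (d - 1) = - sum_mset R" using coeff_linprod[of R] sR d1 pe by simp
  moreover have "R \<noteq> {#}" using sR d1 by auto
  then obtain z where z: "z \<in># R" "norm (sum_mset R) \<le> real (size R) * norm z"
    using sum_mset_norm by blast
  moreover have "poly p z = 0" using z(1) pnz unfolding R_def by simp
  ultimately show ?thesis using sR by (intro exI[of _ z]) simp
qed

definition Zset :: "nat \<Rightarrow> real set" where
  "Zset n = {cmod z | z E. is_tree n E \<and> poly (indep_poly n E) z = 0}"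

lemma Zset_finite: "finite (Zset n)"
proof -
  define EB where "EB = {E :: nat \<Rightarrow> nat \<Rightarrow> bool. \<forall>u v. E u v \<longrightarrow> u < n \<and> v < n}"
  have inj: "inj_on (\<lambda>E. {(u,v). E u v}) EB"
  proof (rule inj_onI)
    fix E E' :: "nat \<Rightarrow> nat \<Rightarrow> bool"
    assume eq: "{(u,v). E u v} = {(u,v). E' u v}"
    show "E = E'"
    proof (intro ext)
      fix u v
      have "E u v \<longleftrightarrow> (u,v) \<in> {(u,v). E u v}" by simp
      also have "\<dots> \<longleftrightarrow> (u,v) \<in> {(u,v). E' u v}" using eq by simp
      finally show "E u v = E' u v" by simp
    qed
  qed
  have "(\<lambda>E. {(u,v). E u v}) ` EB \<subseteq> Pow ({0..<n} \<times> {0..<n})" unfolding EB_def by auto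
  hence "finite ((\<lambda>E. {(u,v). E u v}) ` EB)" by (rule finite_subset) simp
  hence finEB: "finite EB" using finite_imageD inj by blast
  have "Zset n \<subseteq> (\<Union>E\<in>EB. cmod ` {z. poly (indep_poly n E) z = 0})"
    unfolding Zset_def EB_def is_tree_def simple_graph_def by blast
  moreover have "finite (\<Union>E\<in>EB. cmod ` {z. poly (indep_poly n E) z = 0})"
    using finEB poly_roots_finite[OF indep_poly_nz] by blast
  ultimately show ?thesis by (rule finite_subset)
qed

lemma MT_eq: "M_T n = Max (Zset n)" unfolding M_T_def Zset_def ..

lemma MT_ge: "is_tree n E \<Longrightarrow> poly (indep_poly n E) z = 0 \<Longrightarrow> cmod z \<le> M_T n"
  unfolding MT_eq using Zset_finite by (intro Max_ge) (auto simp: Zset_def)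

lemma MT_le:
  assumes "1 \<le> n" "Zset n \<noteq> {}"
  shows "M_T n \<le> 2 * real n * 2 powr (real n / 2)"
proof -
  have "M_T n \<in> Zset n" unfolding MT_eq using Zset_finite assms(2) by (rule Max_in)
  then obtain z E where "M_T n = cmod z" "is_tree n E" "poly (indep_poly n E) z = 0"
    unfolding Zset_def by blast
  thus ?thesis using tree_root_bound[OF _ assms(1)] by simp
qed

lemma MT_lower:
  assumes n3: "3 \<le> n"
  shows "Zset n \<noteq> {} \<and> 2 ^ ((n - 1) div 2 - 1) / real n \<le> M_T n"
proof -
  define m where "m = (n - 1) div 2"
  have m1: "1 \<le> m" and mn: "2 * m < n" unfolding m_def using n3 by auto
  let ?E = "ptree n (spar m)"
  let ?p = "indep_poly n ?E"
  have tr: "is_tree n ?E" by (rule ptree_is_tree) (use spar_lt[OF m1] in auto)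
  note sc = spider_coeffs[OF m1 mn]
  have d1: "1 \<le> n - m" using mn by simp
  from vieta_root[OF sc(1) d1 sc(2)]
  obtain z where z: "poly ?p z = 0" "norm (coeff ?p (n - m - 1)) \<le> real (n - m) * norm z"
    by blast
  have "(2::real) ^ (m - 1) \<le> real (card (Fk n ?E (n - m - 1)))"
    using sc(3) by (metis of_nat_le_iff of_nat_numeral of_nat_power)
  also have "\<dots> = norm (coeff ?p (n - m - 1))" by (simp add: coeff_indep_poly)
  also have "\<dots> \<le> real (n - m) * norm z" by (rule z(2))
  also have "\<dots> \<le> real n * norm z" by (intro mult_right_mono) auto
  finally have "2 ^ (m - 1) / real n \<le> norm z" using n3 by (simp add: divide_le_eq mult.commute)
  also have "norm z \<le> M_T n" using MT_ge[OF tr z(1)] by simp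
  finally have "2 ^ (m - 1) / real n \<le> M_T n" .
  moreover have "Zset n \<noteq> {}" using tr z(1) unfolding Zset_def by blast
  ultimately show ?thesis unfolding m_def by simp
qed

theorem corollary3:
  shows "(\<lambda>n. log 2 (M_T n) / real n) \<longlonglongrightarrow> 1 / 2"
proof (rule tendsto_sandwich[of "\<lambda>n. 1/2 - (2 + log 2 (real n)) / real n" _ _
      "\<lambda>n. 1/2 + (1 + log 2 (real n)) / real n"])
  show "(\<lambda>n. 1/2 - (2 + log 2 (real n)) / real n) \<longlonglongrightarrow> 1/2" by real_asymp
  show "(\<lambda>n. 1/2 + (1 + log 2 (real n)) / real n) \<longlonglongrightarrow> 1/2" by real_asymp
  have bounds: "1/2 - (2 + log 2 (real n)) / real n \<le> log 2 (M_T n) / real n \<and>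
        log 2 (M_T n) / real n \<le> 1/2 + (1 + log 2 (real n)) / real n" if n3: "3 \<le> n" for n
  proof -
    define m where "m = (n - 1) div 2"
    have lo: "2 ^ (m - 1) / real n \<le> M_T n" and ne: "Zset n \<noteq> {}"
      using MT_lower[OF n3] unfolding m_def by auto
    have hi: "M_T n \<le> 2 * real n * 2 powr (real n / 2)" using MT_le[OF _ ne] n3 by simp
    have npos: "0 < real n" using n3 by simp
    have lpos: "0 < 2 ^ (m - 1) / real n" using npos by simp
    have Mpos: "0 < M_T n" using lpos lo by linarith
    have "log 2 (2 ^ (m - 1) / real n) = real (m - 1) - log 2 (real n)"
      using npos by (simp add: log_divide log_nat_power)
    moreover have "log 2 (2 ^ (m - 1) / real n) \<le> log 2 (M_T n)"
      by (rule log_mono) (use lpos lo in auto)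
    moreover have "real (m - 1) \<ge> real n / 2 - 2" unfolding m_def using n3 by linarith
    ultimately have L: "real n / 2 - 2 - log 2 (real n) \<le> log 2 (M_T n)" by linarith
    have "log 2 (M_T n) \<le> log 2 (2 * real n * 2 powr (real n / 2))"
      by (rule log_mono) (use Mpos hi in auto)
    also have "\<dots> = 1 + log 2 (real n) + real n / 2"
      using npos by (simp add: log_mult)
    finally have U: "log 2 (M_T n) \<le> 1 + log 2 (real n) + real n / 2" .
    have "1/2 - (2 + log 2 (real n)) / real n = (real n / 2 - 2 - log 2 (real n)) / real n"
      using npos by (simp add: field_simps)
    also have "\<dots> \<le> log 2 (M_T n) / real n" using L npos by (simp add: divide_right_mono)
    finally have 1: "1/2 - (2 + log 2 (real n)) / real n \<le> log 2 (M_T n) / real n" .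
    have "log 2 (M_T n) / real n \<le> (1 + log 2 (real n) + real n / 2) / real n"
      using U npos by (simp add: divide_right_mono)
    also have "\<dots> = 1/2 + (1 + log 2 (real n)) / real n" using npos by (simp add: field_simps)
    finally show ?thesis using 1 by simp
  qed
  show "\<forall>\<^sub>F n in sequentially. 1/2 - (2 + log 2 (real n)) / real n \<le> log 2 (M_T n) / real n"
    unfolding eventually_sequentially using bounds by blast
  show "\<forall>\<^sub>F n in sequentially. log 2 (M_T n) / real n \<le> 1/2 + (1 + log 2 (real n)) / real n"
    unfolding eventually_sequentially using bounds by blast
qed

end
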